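(* Let $m,n\ge1$, $a\in(0,\infty)^m$, $b\in(0,\infty)^n$, and let $\Omega$ be a real $m\times n$ matrix. Let $(A,B)_0$ be a point in the interior of $\tilde{\mathcal A}$ and define $(A,B)_{k+1}=T_2(T_1((A,B)_k))$. If $(\overline A,\overline B)$ is a limit point of the sequence $((A,B)_k)_k$, then $$F(T_1(\overline A,\overline B))=F(T_2(T_1(\overline A,\overline B)))=F(\overline A,\overline B).$$
   Context: $\mathcal A$ is the set of pairs $(A,B)$ of $(m+1)\times(n+1)$ real matrices (indices $i=0,\dots,m$, $j=0,\dots,n$) with: $A_{ij},B_{ij}\ge0$; $a_i=\sum_{j=0}^nA_{ij}$ for $i=1,\dots,m$; $A_{0j}=0$ for all $j$; $b_j=\sum_{i=0}^mB_{ij}$ for $j=1,\dots,n$; $B_{i0}=0$ for all $i$. $F(A,B)=\sum_{i=1}^m\sum_{j=1}^n\sqrt{A_{ij}B_{ij}}\,\Omega_{ij}$. $\tilde{\mathcal A}\subset\mathcal A$ consists of those $(A,B)$ with: (1) $A_{ij}=B_{ij}=0$ whenever $i,j\ge1$ and $\Omega_{ij}\le0$; (2) for $j\ge1$, $B_{0j}=0$ if there is $i\ge1$ with $\Omega_{ij}>0$; (3) for $i\ge1$, $A_{i0}=0$ if there is $j\ge1$ with $\Omega_{ij}>0$. $T_1(A,B)=(E,B)$ where $E_{ij}=A_{ij}$ if $i=0$ or $j=0$, and otherwise $E_{ij}=a_iB_{ij}\Omega_{ij}^2/\sum_{k=1}^nB_{ik}\Omega_{ik}^2$ if this denominator is positive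 and $0$ otherwise. $T_2(A,B)=(A,E)$ where $E_{ij}=B_{ij}$ if $i=0$ or $j=0$, and otherwise $E_{ij}=b_jA_{ij}\Omega_{ij}^2/\sum_{k=1}^mA_{kj}\Omega_{kj}^2$ if this denominator is positive and $0$ otherwise. "Interior" refers to the interior of $\tilde{\mathcal A}$ relative to the affine space it spans. *)

theory Defs
  imports "HOL-Analysis.Analysis"
begin

text \<open>Matrices with indices 0..m, 0..n are modelled as real^('n option)^('m option):
  index None plays the role of 0, index Some i the role of i (i = 1..m, resp. 1..n).
  a :: real^'m, b :: real^'n, Omega :: real^'n^'m (indices 1..m, 1..n).\<close>

type_synonym ('m,'n) mpair = "(real^'n option^'m option) \<times> (real^'n option^'m option)"

definition Aset :: "real^'m \<Rightarrow> real^'n \<Rightarrow> ('m::finite,'n::finite) mpair set" where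
  "Aset a b = {(A,B).
     (\<forall>i j. A$i$j \<ge> 0 \<and> B$i$j \<ge> 0) \<and>
     (\<forall>i. a$i = (\<Sum>j\<in>UNIV. A$Some i$j)) \<and>
     (\<forall>j. A$None$j = 0) \<and>
     (\<forall>j. b$j = (\<Sum>i\<in>UNIV. B$i$Some j)) \<and>
     (\<forall>i. B$i$None = 0)}"

definition Atilde :: "real^'m \<Rightarrow> real^'n \<Rightarrow> real^'n^'m \<Rightarrow> ('m::finite,'n::finite) mpair set" where
  "Atilde a b \<Omega> = {(A,B) \<in> Aset a b.
     (\<forall>i j. \<Omega>$i$j \<le> 0 \<longrightarrow> A$Some i$Some j = 0 \<and> B$Some i$Some j = 0) \<and>
     (\<forall>j. (\<exists>i. \<Omega>$i$j > 0) \<longrightarrow> B$None$Some j = 0) \<and>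
     (\<forall>i. (\<exists>j. \<Omega>$i$j > 0) \<longrightarrow> A$Some i$None = 0)}"

definition Fobj :: "real^'n^'m \<Rightarrow> ('m::finite,'n::finite) mpair \<Rightarrow> real" where
  "Fobj \<Omega> P = (\<Sum>i\<in>UNIV. \<Sum>j\<in>UNIV.
      sqrt (fst P $ Some i $ Some j * snd P $ Some i $ Some j) * \<Omega>$i$j)"

definition T1 :: "real^'m \<Rightarrow> real^'n^'m \<Rightarrow> ('m::finite,'n::finite) mpair \<Rightarrow> ('m,'n) mpair" where
  "T1 a \<Omega> P = (let A = fst P; B = snd P in
     ((\<chi> i j. case (i, j) of
        (Some i', Some j') \<Rightarrow>
          (let d = (\<Sum>k\<in>UNIV. B$Some i'$Some k * (\<Omega>$i'$k)^2) in
           if d > 0 then a$i' * B$i$j * (\<Omega>$i'$j')^2 / d else 0)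
      | _ \<Rightarrow> A$i$j), B))"

definition T2 :: "real^'n \<Rightarrow> real^'n^'m \<Rightarrow> ('m::finite,'n::finite) mpair \<Rightarrow> ('m,'n) mpair" where
  "T2 b \<Omega> P = (let A = fst P; B = snd P in
     (A, (\<chi> i j. case (i, j) of
        (Some i', Some j') \<Rightarrow>
          (let d = (\<Sum>k\<in>UNIV. A$Some k$Some j' * (\<Omega>$k$j')^2) in
           if d > 0 then b$j' * A$i$j * (\<Omega>$i'$j')^2 / d else 0)
      | _ \<Rightarrow> B$i$j)))"

end

theory Submission imports Defs begin

definition AA :: "('m::finite,'n::finite) mpair \<Rightarrow> 'm \<Rightarrow> 'n \<Rightarrow> real" where
  "AA P i j = fst P $ Some i $ Some j"
definition BB :: "('m::finite,'n::finite) mpair \<Rightarrow> 'm \<Rightarrow> 'n \<Rightarrow> real" where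
  "BB P i j = snd P $ Some i $ Some j"
definition dr :: "real^'n^'m \<Rightarrow> ('m::finite,'n::finite) mpair \<Rightarrow> 'm \<Rightarrow> real" where
  "dr \<Omega> P i = (\<Sum>k\<in>UNIV. BB P i k * (\<Omega>$i$k)^2)"
definition ec :: "real^'n^'m \<Rightarrow> ('m::finite,'n::finite) mpair \<Rightarrow> 'n \<Rightarrow> real" where
  "ec \<Omega> P j = (\<Sum>k\<in>UNIV. AA P k j * (\<Omega>$k$j)^2)"

definition inS :: "real^'m \<Rightarrow> real^'n \<Rightarrow> real^'n^'m \<Rightarrow> ('m::finite,'n::finite) mpair \<Rightarrow> bool" where
  "inS a b \<Omega> P \<longleftrightarrow> (\<forall>i j. 0 \<le> AA P i j \<and> 0 \<le> BB P i j) \<and>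
     (\<forall>i j. \<Omega>$i$j \<le> 0 \<longrightarrow> AA P i j = 0 \<and> BB P i j = 0) \<and>
     (\<forall>i. (\<Sum>j\<in>UNIV. AA P i j) \<le> a$i) \<and> (\<forall>j. (\<Sum>i\<in>UNIV. BB P i j) \<le> b$j)"

lemma Fobj_AB: "Fobj \<Omega> P = (\<Sum>i\<in>UNIV. \<Sum>j\<in>UNIV. sqrt (AA P i j * BB P i j) * \<Omega>$i$j)"
  by (simp add: Fobj_def AA_def BB_def)

lemma T1_AA: "AA (T1 a \<Omega> P) i j = (if dr \<Omega> P i > 0 then a$i * BB P i j * (\<Omega>$i$j)^2 / dr \<Omega> P i else 0)"
  by (simp add: T1_def Let_def AA_def BB_def dr_def)
lemma T1_BB: "BB (T1 a \<Omega> P) i j = BB P i j"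
  by (simp add: T1_def Let_def BB_def)
lemma T2_AA: "AA (T2 b \<Omega> P) i j = AA P i j"
  by (simp add: T2_def Let_def AA_def)
lemma T2_BB: "BB (T2 b \<Omega> P) i j = (if ec \<Omega> P j > 0 then b$j * AA P i j * (\<Omega>$i$j)^2 / ec \<Omega> P j else 0)"
  by (simp add: T2_def Let_def AA_def BB_def ec_def)

lemma dr_nonneg: "inS a b \<Omega> P \<Longrightarrow> 0 \<le> dr \<Omega> P i"
  unfolding dr_def inS_def by (auto intro!: sum_nonneg)
lemma ec_nonneg: "inS a b \<Omega> P \<Longrightarrow> 0 \<le> ec \<Omega> P j"
  unfolding ec_def inS_def by (auto intro!: sum_nonneg)

lemma T1_AA': "inS a b \<Omega> P \<Longrightarrow> AA (T1 a \<Omega> P) i j = a$i * BB P i j * (\<Omega>$i$j)^2 / dr \<Omega> P i"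
  using dr_nonneg[of a b \<Omega> P i] by (auto simp: T1_AA)
lemma T2_BB': "inS a b \<Omega> P \<Longrightarrow> BB (T2 b \<Omega> P) i j = b$j * AA P i j * (\<Omega>$i$j)^2 / ec \<Omega> P j"
  using ec_nonneg[of a b \<Omega> P j] by (auto simp: T2_BB)

lemma T1_inS:
  assumes "inS a b \<Omega> P" "\<forall>i. a$i > 0"
  shows "inS a b \<Omega> (T1 a \<Omega> P)"
proof -
  have rs: "(\<Sum>j\<in>UNIV. AA (T1 a \<Omega> P) i j) \<le> a$i" for i
  proof (cases "dr \<Omega> P i > 0")
    case True
    have "(\<Sum>j\<in>UNIV. AA (T1 a \<Omega> P) i j) = (\<Sum>j\<in>UNIV. a$i / dr \<Omega> P i * (BB P i j * (\<Omega>$i$j)^2))"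
      using True by (auto simp: T1_AA intro!: sum.cong)
    also have "\<dots> = a$i / dr \<Omega> P i * dr \<Omega> P i" by (simp add: sum_distrib_left dr_def)
    finally show ?thesis using True by simp
  next
    case False then show ?thesis using assms(2) by (simp add: T1_AA less_imp_le)
  qed
  have "0 \<le> AA (T1 a \<Omega> P) i j" for i j
    using dr_nonneg[OF assms(1), of i] assms unfolding T1_AA'[OF assms(1)] inS_def
    by (metis divide_nonneg_nonneg less_imp_le mult_nonneg_nonneg zero_le_power2)
  then show ?thesis using assms rs unfolding inS_def
    by (auto simp: T1_BB T1_AA' [OF assms(1)])
qed

lemma T2_inS:
  assumes "inS a b \<Omega> P" "\<forall>j. b$j > 0"
  shows "inS a b \<Omega> (T2 b \<Omega> P)"
proof -
  have rs: "(\<Sum>i\<in>UNIV. BB (T2 b \<Omega> P) i j) \<le> b$j" for j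
  proof (cases "ec \<Omega> P j > 0")
    case True
    have "(\<Sum>i\<in>UNIV. BB (T2 b \<Omega> P) i j) = (\<Sum>i\<in>UNIV. b$j / ec \<Omega> P j * (AA P i j * (\<Omega>$i$j)^2))"
      using True by (auto simp: T2_BB intro!: sum.cong)
    also have "\<dots> = b$j / ec \<Omega> P j * ec \<Omega> P j" by (simp add: sum_distrib_left ec_def)
    finally show ?thesis using True by simp
  next
    case False then show ?thesis using assms(2) by (simp add: T2_BB less_imp_le)
  qed
  have "0 \<le> BB (T2 b \<Omega> P) i j" for i j
    using ec_nonneg[OF assms(1), of j] assms unfolding T2_BB'[OF assms(1)] inS_def
    by (metis divide_nonneg_nonneg less_imp_le mult_nonneg_nonneg zero_le_power2)
  then show ?thesis using assms rs unfolding inS_def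
    by (auto simp: T2_AA T2_BB' [OF assms(1)])
qed

lemma Atilde_inS:
  assumes "P \<in> Atilde a b \<Omega>"
  shows "inS a b \<Omega> P"
proof -
  obtain A B where P: "P = (A,B)" by (cases P)
  have nn: "\<forall>i j. A$i$j \<ge> 0 \<and> B$i$j \<ge> 0" and ra: "\<forall>i. a$i = (\<Sum>j\<in>UNIV. A$Some i$j)"
    and cb: "\<forall>j. b$j = (\<Sum>i\<in>UNIV. B$i$Some j)"
    and z: "\<forall>i j. \<Omega>$i$j \<le> 0 \<longrightarrow> A$Some i$Some j = 0 \<and> B$Some i$Some j = 0"
    using assms unfolding P Atilde_def Aset_def by auto
  have "(\<Sum>j\<in>UNIV. A$Some i$Some j) \<le> a$i" for i
  proof -
    have "(\<Sum>j\<in>UNIV. A$Some i$Some j) = (\<Sum>j\<in>Some ` UNIV. A$Some i$j)"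
      by (simp add: sum.reindex)
    also have "\<dots> \<le> (\<Sum>j\<in>UNIV. A$Some i$j)"
      by (rule sum_mono2) (use nn in auto)
    finally show ?thesis using ra by simp
  qed
  moreover have "(\<Sum>i\<in>UNIV. B$Some i$Some j) \<le> b$j" for j
  proof -
    have "(\<Sum>i\<in>UNIV. B$Some i$Some j) = (\<Sum>i\<in>Some ` UNIV. B$i$Some j)"
      by (simp add: sum.reindex)
    also have "\<dots> \<le> (\<Sum>i\<in>UNIV. B$i$Some j)"
      by (rule sum_mono2) (use nn in auto)
    finally show ?thesis using cb by simp
  qed
  ultimately show ?thesis using nn z unfolding inS_def AA_def BB_def P by auto
qed


definition G1 :: "real^'m \<Rightarrow> real^'n^'m \<Rightarrow> ('m::finite,'n::finite) mpair \<Rightarrow> real" where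
  "G1 a \<Omega> P = (\<Sum>i\<in>UNIV. sqrt (a$i * dr \<Omega> P i))"
definition G2 :: "real^'n \<Rightarrow> real^'n^'m \<Rightarrow> ('m::finite,'n::finite) mpair \<Rightarrow> real" where
  "G2 b \<Omega> P = (\<Sum>j\<in>UNIV. sqrt (b$j * ec \<Omega> P j))"

lemma row_le:
  fixes x y w :: "'k::finite \<Rightarrow> real"
  assumes "\<And>j. 0 \<le> x j" "\<And>j. 0 \<le> y j" "(\<Sum>j\<in>UNIV. x j) \<le> c"
  shows "(\<Sum>j\<in>UNIV. sqrt (x j * y j) * w j) \<le> sqrt (c * (\<Sum>j\<in>UNIV. y j * (w j)^2))"
proof -
  have e: "(\<Sum>j\<in>UNIV. sqrt (x j * y j) * w j) = (\<Sum>j\<in>UNIV. sqrt (x j) * (sqrt (y j) * w j))"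
    by (simp add: real_sqrt_mult mult.assoc)
  have "(\<Sum>j\<in>UNIV. sqrt (x j) * (sqrt (y j) * w j))^2 \<le> (\<Sum>j\<in>UNIV. (sqrt (x j))^2) * (\<Sum>j\<in>UNIV. (sqrt (y j) * w j)^2)"
    by (rule Cauchy_Schwarz_ineq_sum)
  also have "\<dots> = (\<Sum>j\<in>UNIV. x j) * (\<Sum>j\<in>UNIV. y j * (w j)^2)"
    using assms by (simp add: power_mult_distrib)
  also have "\<dots> \<le> c * (\<Sum>j\<in>UNIV. y j * (w j)^2)"
    using assms by (intro mult_right_mono sum_nonneg) auto
  finally show ?thesis unfolding e by (rule real_le_rsqrt)
qed

lemma F_le_G1:
  assumes "inS a b \<Omega> P"
  shows "Fobj \<Omega> P \<le> G1 a \<Omega> P"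
  unfolding Fobj_AB G1_def dr_def
  using assms unfolding inS_def by (intro sum_mono row_le) auto

lemma F_le_G2:
  assumes "inS a b \<Omega> P"
  shows "Fobj \<Omega> P \<le> G2 b \<Omega> P"
proof -
  have "Fobj \<Omega> P = (\<Sum>j\<in>UNIV. \<Sum>i\<in>UNIV. sqrt (BB P i j * AA P i j) * \<Omega>$i$j)"
    unfolding Fobj_AB by (subst sum.swap) (simp add: mult.commute)
  also have "\<dots> \<le> G2 b \<Omega> P"
    unfolding G2_def ec_def
    using assms unfolding inS_def by (intro sum_mono row_le) auto
  finally show ?thesis .
qed

lemma row_eq:
  fixes y w :: "'k::finite \<Rightarrow> real"
  assumes "\<And>j. 0 \<le> y j" "\<And>j. w j \<le> 0 \<Longrightarrow> y j = 0" "0 \<le> c"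
  shows "(\<Sum>j\<in>UNIV. sqrt (c * y j * (w j)^2 / (\<Sum>k\<in>UNIV. y k * (w k)^2) * y j) * w j)
     = sqrt (c * (\<Sum>j\<in>UNIV. y j * (w j)^2))"
proof -
  define d where "d = (\<Sum>k\<in>UNIV. y k * (w k)^2)"
  have d0: "0 \<le> d" unfolding d_def using assms by (auto intro!: sum_nonneg)
  have t: "sqrt (c * y j * (w j)^2 / d * y j) * w j = sqrt (c / d) * (y j * (w j)^2)" for j
  proof (cases "w j \<le> 0")
    case True then show ?thesis using assms by simp
  next
    case False
    have "c * y j * (w j)^2 / d * y j = (c / d) * (y j * w j)^2" by (simp add: power2_eq_square)
    moreover have "sqrt ((c / d) * (y j * w j)^2) = sqrt (c / d) * (y j * w j)"
      using False assms(1)[of j] by (simp only: real_sqrt_mult real_sqrt_abs abs_of_nonneg) (simp add: abs_of_nonneg)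
    ultimately have "sqrt (c * y j * (w j)^2 / d * y j) = sqrt (c / d) * (y j * w j)"
      by metis
    then show ?thesis by (simp add: power2_eq_square)
  qed
  have "(\<Sum>j\<in>UNIV. sqrt (c * y j * (w j)^2 / d * y j) * w j) = sqrt (c / d) * d"
    unfolding t by (simp add: sum_distrib_left d_def)
  also have "\<dots> = sqrt (c * d)"
  proof (cases "d = 0")
    case True then show ?thesis by simp
  next
    case False
    then have "d = sqrt d * sqrt d" using d0 by simp
    then have "sqrt (c / d) * d = sqrt c / sqrt d * (sqrt d * sqrt d)" by (simp add: real_sqrt_divide)
    also have "\<dots> = sqrt c * sqrt d"
    proof -
      have "sqrt d \<noteq> 0" using False d0 by simp
      then show ?thesis by (metis nonzero_mult_div_cancel_right times_divide_eq_left mult.assoc)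
    qed
    finally show ?thesis by (simp add: real_sqrt_mult)
  qed
  finally show ?thesis unfolding d_def .
qed

lemma F_T1:
  assumes "inS a b \<Omega> P" "\<forall>i. a$i > 0"
  shows "Fobj \<Omega> (T1 a \<Omega> P) = G1 a \<Omega> P"
  unfolding Fobj_AB G1_def T1_AA'[OF assms(1)] T1_BB dr_def
  using assms unfolding inS_def by (intro sum.cong refl row_eq) (auto simp: less_imp_le)

lemma F_T2:
  assumes "inS a b \<Omega> P" "\<forall>j. b$j > 0"
  shows "Fobj \<Omega> (T2 b \<Omega> P) = G2 b \<Omega> P"
proof -
  have "Fobj \<Omega> (T2 b \<Omega> P) = (\<Sum>j\<in>UNIV. \<Sum>i\<in>UNIV. sqrt (BB (T2 b \<Omega> P) i j * AA (T2 b \<Omega> P) i j) * \<Omega>$i$j)"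
    unfolding Fobj_AB by (subst sum.swap) (simp add: mult.commute)
  also have "\<dots> = G2 b \<Omega> P"
    unfolding G2_def T2_BB'[OF assms(1)] T2_AA ec_def
    using assms unfolding inS_def by (intro sum.cong refl row_eq) (auto simp: less_imp_le)
  finally show ?thesis .
qed


lemma lim_AA: "(Y \<longlongrightarrow> L) F \<Longrightarrow> ((\<lambda>k. AA (Y k) i j) \<longlongrightarrow> AA L i j) F"
  unfolding AA_def by (intro tendsto_vec_nth tendsto_fst)
lemma lim_BB: "(Y \<longlongrightarrow> L) F \<Longrightarrow> ((\<lambda>k. BB (Y k) i j) \<longlongrightarrow> BB L i j) F"
  unfolding BB_def by (intro tendsto_vec_nth tendsto_snd)

lemma lim_Fobj: "(Y \<longlongrightarrow> L) F \<Longrightarrow> ((\<lambda>k. Fobj \<Omega> (Y k)) \<longlongrightarrow> Fobj \<Omega> L) F"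
  unfolding Fobj_AB by (intro tendsto_intros lim_AA lim_BB)
lemma lim_dr: "(Y \<longlongrightarrow> L) F \<Longrightarrow> ((\<lambda>k. dr \<Omega> (Y k) i) \<longlongrightarrow> dr \<Omega> L i) F"
  unfolding dr_def by (intro tendsto_intros lim_AA lim_BB)
lemma lim_G1: "(Y \<longlongrightarrow> L) F \<Longrightarrow> ((\<lambda>k. G1 a \<Omega> (Y k)) \<longlongrightarrow> G1 a \<Omega> L) F"
  unfolding G1_def by (intro tendsto_intros lim_dr)

lemma inS_limit:
  assumes Y: "\<And>k. inS a b \<Omega> (Y k)" and lim: "Y \<longlonglongrightarrow> L"
  shows "inS a b \<Omega> L"
proof -
  have "0 \<le> AA L i j" for i j
    by (rule LIMSEQ_le_const[OF lim_AA[OF lim]]) (use Y in \<open>auto simp: inS_def\<close>)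
  moreover have "0 \<le> BB L i j" for i j
    by (rule LIMSEQ_le_const[OF lim_BB[OF lim]]) (use Y in \<open>auto simp: inS_def\<close>)
  moreover have "AA L i j = 0 \<and> BB L i j = 0" if "\<Omega>$i$j \<le> 0" for i j
  proof -
    have "(\<lambda>k. AA (Y k) i j) = (\<lambda>k. 0)" "(\<lambda>k. BB (Y k) i j) = (\<lambda>k. 0)"
      using Y that by (auto simp: inS_def)
    then show ?thesis using lim_AA[OF lim, of i j] lim_BB[OF lim, of i j]
      by (metis LIMSEQ_unique tendsto_const)
  qed
  moreover have "(\<Sum>j\<in>UNIV. AA L i j) \<le> a$i" for i
    by (rule LIMSEQ_le_const2[OF tendsto_sum[OF lim_AA[OF lim]]]) (use Y in \<open>auto simp: inS_def\<close>)
  moreover have "(\<Sum>i\<in>UNIV. BB L i j) \<le> b$j" for j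
    by (rule LIMSEQ_le_const2[OF tendsto_sum[OF lim_BB[OF lim]]]) (use Y in \<open>auto simp: inS_def\<close>)
  ultimately show ?thesis unfolding inS_def by auto
qed

theorem lemma2p17:
  fixes a :: "real^'m::finite" and b :: "real^'n::finite" and \<Omega> :: "real^'n^'m"
    and X :: "nat \<Rightarrow> ('m,'n) mpair" and L :: "('m,'n) mpair" and r :: "nat \<Rightarrow> nat"
  assumes apos: "\<forall>i. a$i > 0" and bpos: "\<forall>j. b$j > 0"
    and X0: "X 0 \<in> rel_interior (Atilde a b \<Omega>)"
    and Xsuc: "\<forall>k. X (Suc k) = T2 b \<Omega> (T1 a \<Omega> (X k))"
    and r: "strict_mono r" and lim: "(X \<circ> r) \<longlonglongrightarrow> L"
  shows "Fobj \<Omega> (T1 a \<Omega> L) = Fobj \<Omega> (T2 b \<Omega> (T1 a \<Omega> L)) \<and>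
         Fobj \<Omega> (T2 b \<Omega> (T1 a \<Omega> L)) = Fobj \<Omega> L"
proof -
  have XS: "inS a b \<Omega> (X k)" for k
  proof (induction k)
    case 0 show ?case using X0 rel_interior_subset Atilde_inS by blast
  next
    case (Suc k) then show ?case using Xsuc T1_inS T2_inS apos bpos by metis
  qed
  have m1: "Fobj \<Omega> (X k) \<le> Fobj \<Omega> (T1 a \<Omega> (X k))" for k
    using F_le_G1[OF XS] F_T1[OF XS apos] by simp
  have m2: "Fobj \<Omega> (T1 a \<Omega> (X k)) \<le> Fobj \<Omega> (X (Suc k))" for k
    using F_le_G2[OF T1_inS[OF XS apos]] F_T2[OF T1_inS[OF XS apos] bpos] Xsuc by simp
  have inc: "incseq (\<lambda>k. Fobj \<Omega> (X k))"
    by (rule incseq_SucI) (use m1 m2 order_trans in blast)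
  have limr: "(\<lambda>k. X (r k)) \<longlonglongrightarrow> L" using lim by (simp add: comp_def)
  have LS: "inS a b \<Omega> L" by (rule inS_limit[OF XS limr])
  have FL: "Fobj \<Omega> (X k) \<le> Fobj \<Omega> L" for k
  proof (rule LIMSEQ_le_const[OF lim_Fobj[OF limr]])
    show "\<exists>N. \<forall>n\<ge>N. Fobj \<Omega> (X k) \<le> Fobj \<Omega> (X (r n))"
      using inc seq_suble[OF r] by (metis incseq_def order_trans)
  qed
  have T1L: "Fobj \<Omega> (T1 a \<Omega> L) = Fobj \<Omega> L"
  proof -
    have "G1 a \<Omega> L \<le> Fobj \<Omega> L"
    proof (rule LIMSEQ_le_const2[OF lim_G1[OF limr]])
      show "\<exists>N. \<forall>n\<ge>N. G1 a \<Omega> (X (r n)) \<le> Fobj \<Omega> L"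
        using F_T1[OF XS apos] m2 FL by (metis order_trans)
    qed
    then show ?thesis using F_T1[OF LS apos] F_le_G1[OF LS] by simp
  qed
  define Q where "Q = T1 a \<Omega> L"
  have QS: "inS a b \<Omega> Q" unfolding Q_def by (rule T1_inS[OF LS apos])
  define I where "I = {i. dr \<Omega> L i > 0}"
  define h where "h P j = (\<Sum>i\<in>I. a$i * BB P i j * (\<Omega>$i$j)^2 / dr \<Omega> P i * (\<Omega>$i$j)^2)" for P j
  have ecT1: "ec \<Omega> (T1 a \<Omega> P) j = (\<Sum>i\<in>UNIV. a$i * BB P i j * (\<Omega>$i$j)^2 / dr \<Omega> P i * (\<Omega>$i$j)^2)"
    if "inS a b \<Omega> P" for P j
    unfolding ec_def T1_AA'[OF that] ..
  have c1: "h P j \<le> ec \<Omega> (T1 a \<Omega> P) j" if "inS a b \<Omega> P" for P j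
    unfolding ecT1[OF that] h_def
  proof (rule sum_mono2)
    show "0 \<le> a$i * BB P i j * (\<Omega>$i$j)^2 / dr \<Omega> P i * (\<Omega>$i$j)^2" for i
      using that apos dr_nonneg[OF that, of i] unfolding inS_def
      by (metis divide_nonneg_nonneg less_imp_le mult_nonneg_nonneg zero_le_power2)
  qed auto
  have c2: "h L j = ec \<Omega> Q j" for j
    unfolding Q_def ecT1[OF LS] h_def
  proof (rule sum.mono_neutral_left)
    show "\<forall>i\<in>UNIV - I. a$i * BB L i j * (\<Omega>$i$j)^2 / dr \<Omega> L i * (\<Omega>$i$j)^2 = 0"
    proof
      fix i assume "i \<in> UNIV - I"
      then have "dr \<Omega> L i = 0" using dr_nonneg[OF LS, of i] unfolding I_def by auto
      then show "a$i * BB L i j * (\<Omega>$i$j)^2 / dr \<Omega> L i * (\<Omega>$i$j)^2 = 0" by simp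
    qed
  qed auto
  have c3: "(\<lambda>k. \<Sum>j\<in>UNIV. sqrt (b$j * h (X (r k)) j)) \<longlonglongrightarrow> (\<Sum>j\<in>UNIV. sqrt (b$j * h L j))"
    unfolding h_def
  proof (intro tendsto_sum tendsto_real_sqrt tendsto_mult tendsto_const tendsto_divide lim_BB[OF limr] lim_dr[OF limr])
    fix i assume "i \<in> I" then show "dr \<Omega> L i \<noteq> 0" unfolding I_def by auto
  qed
  have c4: "(\<Sum>j\<in>UNIV. sqrt (b$j * h (X (r k)) j)) \<le> Fobj \<Omega> L" for k
  proof -
    have "(\<Sum>j\<in>UNIV. sqrt (b$j * h (X (r k)) j)) \<le> G2 b \<Omega> (T1 a \<Omega> (X (r k)))"
      unfolding G2_def
      by (intro sum_mono real_sqrt_le_mono mult_left_mono c1 XS) (use bpos less_imp_le in auto)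
    also have "\<dots> = Fobj \<Omega> (X (Suc (r k)))"
      using F_T2[OF T1_inS[OF XS apos] bpos] Xsuc by simp
    also have "\<dots> \<le> Fobj \<Omega> L" by (rule FL)
    finally show ?thesis .
  qed
  have "G2 b \<Omega> Q \<le> Fobj \<Omega> L"
    unfolding G2_def c2[symmetric]
    by (rule LIMSEQ_le_const2[OF c3]) (use c4 in auto)
  moreover have "Fobj \<Omega> L \<le> G2 b \<Omega> Q" using F_le_G2[OF QS] T1L unfolding Q_def by simp
  ultimately have "Fobj \<Omega> (T2 b \<Omega> Q) = Fobj \<Omega> L" using F_T2[OF QS bpos] by simp
  then show ?thesis using T1L unfolding Q_def by simp
qed

end
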